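(* Let $\mathcal{G}$ be an ample Hausdorff groupoid and $R$ a commutative ring with unit. If the Steinberg algebra $A_R(\mathcal{G})$ is von Neumann regular, then for all units $u,v\in\mathcal{G}^{(0)}$ and every $x\in R\mathcal{G}_u^v$ there exists $y\in R\mathcal{G}_v^u$ with $xyx=x$ (product computed in the groupoid ring $R\mathcal{G}$).
   Context: A topological groupoid $\mathcal{G}$ has domain and range maps $d(x)=x^{-1}x$, $r(x)=xx^{-1}$, unit space $\mathcal{G}^{(0)}=d(\mathcal{G})$; $(x,y)$ is composable iff $d(x)=r(y)$. It is étale if $d$ is a local homeomorphism; an open bisection is an open $U\subseteq\mathcal{G}$ with $d|_U,r|_U$ homeomorphisms onto open subsets of $\mathcal{G}^{(0)}$; $\mathcal{G}$ is ample if it is étale with a basis of compact open bisections. For a commutative unital ring $R$, the Steinberg algebra $A_R(\mathcal{G})$ is the $R$-module of compactly supported locally constant (continuous, $R$ discrete) functions $\mathcal{G}\to R$, with pointwise addition and convolution $(f*g)(\gamma)=\sum_{\gamma=\alpha\beta}f(\alpha)g(\beta)$. For $u,v\in\mathcal{G}^{(0)}$, $\mathcal{G}_u^v=\{\gamma\in\mathcal{G}: d(\gamma)=u,\ r(\gamma)=v\}$. $R\mathcal{G}$ is the groupoid ring: the free $R$-module on $\mathcal{G}$ with product $g\cdot h=gh$ if $d(g)=r(h)$ and $0$ otherwise; $R\mathcal{G}_u^v\subseteq R\mathcal{G}$ is the set of finite $R$-linear combinations of elements of $\mathcal{G}_u^v$. A ring $A$ is von Neumann regular if $x\in xAx$ for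 all $x\in A$. *)

theory Defs
  imports "HOL-Analysis.Analysis"
begin

text \<open>A groupoid is modelled on the whole type 'g, with a total multiplication
  m (only meaningful on composable pairs) and an inversion iv.
  d x = x^-1 x, r x = x x^-1; (x,y) is composable iff d x = r y.\<close>

definition gdom :: "('g \<Rightarrow> 'g \<Rightarrow> 'g) \<Rightarrow> ('g \<Rightarrow> 'g) \<Rightarrow> 'g \<Rightarrow> 'g" where
  "gdom m iv x = m (iv x) x"

definition gran :: "('g \<Rightarrow> 'g \<Rightarrow> 'g) \<Rightarrow> ('g \<Rightarrow> 'g) \<Rightarrow> 'g \<Rightarrow> 'g" where
  "gran m iv x = m x (iv x)"

definition unit_space :: "('g \<Rightarrow> 'g \<Rightarrow> 'g) \<Rightarrow> ('g \<Rightarrow> 'g) \<Rightarrow> 'g set" where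
  "unit_space m iv = range (gdom m iv)"

definition groupoid :: "('g \<Rightarrow> 'g \<Rightarrow> 'g) \<Rightarrow> ('g \<Rightarrow> 'g) \<Rightarrow> bool" where
  "groupoid m iv \<longleftrightarrow>
     (\<forall>x. iv (iv x) = x) \<and>
     (\<forall>x y. gdom m iv x = gran m iv y \<longrightarrow>
        gdom m iv (m x y) = gdom m iv y \<and> gran m iv (m x y) = gran m iv x) \<and>
     (\<forall>x y z. gdom m iv x = gran m iv y \<longrightarrow> gdom m iv y = gran m iv z \<longrightarrow>
        m (m x y) z = m x (m y z)) \<and>
     (\<forall>x y. gdom m iv x = gran m iv y \<longrightarrow> m (iv x) (m x y) = y \<and> m (m x y) (iv y) = x) \<and>
     (\<forall>x. m (gran m iv x) x = x \<and> m x (gdom m iv x) = x)"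

definition topological_groupoid :: "('g::topological_space \<Rightarrow> 'g \<Rightarrow> 'g) \<Rightarrow> ('g \<Rightarrow> 'g) \<Rightarrow> bool" where
  "topological_groupoid m iv \<longleftrightarrow> groupoid m iv \<and>
     continuous_on {(x, y). gdom m iv x = gran m iv y} (\<lambda>(x, y). m x y) \<and>
     continuous_on UNIV iv"

definition homeo_onto_open_units ::
  "('g::topological_space \<Rightarrow> 'g \<Rightarrow> 'g) \<Rightarrow> ('g \<Rightarrow> 'g) \<Rightarrow> ('g \<Rightarrow> 'g) \<Rightarrow> 'g set \<Rightarrow> bool" where
  "homeo_onto_open_units m iv f U \<longleftrightarrow>
     (\<exists>g. homeomorphism U (f ` U) f g) \<and> openin (top_of_set (unit_space m iv)) (f ` U)"

definition etale :: "('g::topological_space \<Rightarrow> 'g \<Rightarrow> 'g) \<Rightarrow> ('g \<Rightarrow> 'g) \<Rightarrow> bool" where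
  "etale m iv \<longleftrightarrow> topological_groupoid m iv \<and>
     (\<forall>x. \<exists>U. open U \<and> x \<in> U \<and> homeo_onto_open_units m iv (gdom m iv) U)"

definition open_bisection :: "('g::topological_space \<Rightarrow> 'g \<Rightarrow> 'g) \<Rightarrow> ('g \<Rightarrow> 'g) \<Rightarrow> 'g set \<Rightarrow> bool" where
  "open_bisection m iv U \<longleftrightarrow> open U \<and>
     homeo_onto_open_units m iv (gdom m iv) U \<and> homeo_onto_open_units m iv (gran m iv) U"

definition ample :: "('g::topological_space \<Rightarrow> 'g \<Rightarrow> 'g) \<Rightarrow> ('g \<Rightarrow> 'g) \<Rightarrow> bool" where
  "ample m iv \<longleftrightarrow> etale m iv \<and>
     topological_basis {U. compact U \<and> open_bisection m iv U}"

text \<open>The same formula is the product of the groupoid ring RG (the bilinear extension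
  of g.h = gh if composable, 0 otherwise) on finitely supported functions.\<close>
definition conv :: "('g \<Rightarrow> 'g \<Rightarrow> 'g) \<Rightarrow> ('g \<Rightarrow> 'g) \<Rightarrow> ('g \<Rightarrow> 'r::comm_ring_1) \<Rightarrow> ('g \<Rightarrow> 'r) \<Rightarrow> 'g \<Rightarrow> 'r" where
  "conv m iv f g \<gamma> =
     (\<Sum>(\<alpha>, \<beta>) \<in> {(\<alpha>, \<beta>). gdom m iv \<alpha> = gran m iv \<beta> \<and> m \<alpha> \<beta> = \<gamma> \<and> f \<alpha> \<noteq> 0 \<and> g \<beta> \<noteq> 0}.
        f \<alpha> * g \<beta>)"

definition steinberg :: "('g::topological_space \<Rightarrow> 'r::comm_ring_1) set" where
  "steinberg = {f. compact (closure {x. f x \<noteq> 0}) \<and>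
     (\<forall>x. \<exists>U. open U \<and> x \<in> U \<and> (\<forall>y\<in>U. f y = f x))}"

definition von_neumann_regular_steinberg ::
  "('g::topological_space \<Rightarrow> 'g \<Rightarrow> 'g) \<Rightarrow> ('g \<Rightarrow> 'g) \<Rightarrow> 'r::comm_ring_1 itself \<Rightarrow> bool" where
  "von_neumann_regular_steinberg m iv _ \<longleftrightarrow>
     (\<forall>f \<in> (steinberg :: ('g \<Rightarrow> 'r) set). \<exists>g \<in> steinberg. conv m iv (conv m iv f g) f = f)"

definition groupoid_ring_hom :: "('g \<Rightarrow> 'g \<Rightarrow> 'g) \<Rightarrow> ('g \<Rightarrow> 'g) \<Rightarrow> 'g \<Rightarrow> 'g \<Rightarrow> ('g \<Rightarrow> 'r::comm_ring_1) set" where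
  "groupoid_ring_hom m iv u v = {x. finite {\<gamma>. x \<gamma> \<noteq> 0} \<and>
     (\<forall>\<gamma>. x \<gamma> \<noteq> 0 \<longrightarrow> gdom m iv \<gamma> = u \<and> gran m iv \<gamma> = v)}"

end

theory Submission
  imports Defs
begin

lemma homeo_inj: "homeo_onto_open_units m iv f U \<Longrightarrow> inj_on f U"
  unfolding homeo_onto_open_units_def
  by (metis homeomorphism_apply1 inj_on_inverseI)

definition locconst :: "('g::topological_space \<Rightarrow> 'r) \<Rightarrow> bool" where
  "locconst h \<longleftrightarrow> (\<forall>x. \<exists>U. open U \<and> x \<in> U \<and> (\<forall>y\<in>U. h y = h x))"

lemma locconst_add:
  assumes "locconst h1" "locconst (h2 :: 'g::topological_space \<Rightarrow> 'r::comm_ring_1)"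
  shows "locconst (\<lambda>y. h1 y + h2 y)"
  unfolding locconst_def
proof
  fix x
  obtain U where U: "open U" "x \<in> U" "\<forall>y\<in>U. h1 y = h1 x"
    using assms(1) unfolding locconst_def by blast
  obtain V where V: "open V" "x \<in> V" "\<forall>y\<in>V. h2 y = h2 x"
    using assms(2) unfolding locconst_def by blast
  have "open (U \<inter> V)" "x \<in> U \<inter> V" using U V by auto
  moreover have "\<forall>y\<in>U \<inter> V. h1 y + h2 y = h1 x + h2 x" using U(3) V(3) by simp
  ultimately show "\<exists>W. open W \<and> x \<in> W \<and> (\<forall>y\<in>W. h1 y + h2 y = h1 x + h2 x)" by blast
qed

lemma locconst_sum:
  fixes h :: "'i \<Rightarrow> 'g::topological_space \<Rightarrow> 'r::comm_ring_1"
  assumes "finite I" and "\<forall>i\<in>I. locconst (h i)"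
  shows "locconst (\<lambda>y. \<Sum>i\<in>I. h i y)"
  using assms
proof (induction I rule: finite_induct)
  case empty
  show ?case unfolding locconst_def using open_UNIV by (intro allI exI[of _ UNIV]) simp
next
  case (insert i I)
  have "locconst (\<lambda>y. h i y + (\<Sum>i\<in>I. h i y))"
    using insert by (intro locconst_add) auto
  then show ?case using insert.hyps by (simp add: sum.insert)
qed

theorem proposition3p1:
  fixes m :: "'g::t2_space \<Rightarrow> 'g \<Rightarrow> 'g" and iv :: "'g \<Rightarrow> 'g"
  assumes "ample m iv"
    and "von_neumann_regular_steinberg m iv TYPE('r::comm_ring_1)"
    and "u \<in> unit_space m iv" and "v \<in> unit_space m iv"
    and "x \<in> (groupoid_ring_hom m iv u v :: ('g \<Rightarrow> 'r) set)"
  shows "\<exists>y \<in> groupoid_ring_hom m iv v u. conv m iv (conv m iv x y) x = x"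
proof -
  define d where "d = gdom m iv"
  define r where "r = gran m iv"
  have et: "etale m iv" using assms(1) unfolding ample_def by blast
  have grp: "groupoid m iv" using et unfolding etale_def topological_groupoid_def by blast
  have comp: "d (m a b) = d b \<and> r (m a b) = r a" if "d a = r b" for a b
    using grp that unfolding groupoid_def d_def r_def by blast
  have convdr: "conv m iv F G a = (\<Sum>(\<alpha>, \<beta>) \<in> {(\<alpha>, \<beta>). d \<alpha> = r \<beta> \<and> m \<alpha> \<beta> = a \<and> F \<alpha> \<noteq> 0 \<and> G \<beta> \<noteq> 0}. F \<alpha> * G \<beta>)"
    for F G :: "'g \<Rightarrow> 'r" and a
    unfolding conv_def d_def r_def by simp
  have basis: "topological_basis {U. compact U \<and> open_bisection m iv U}"
    using assms(1) unfolding ample_def by blast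
  have "\<forall>\<gamma>. \<exists>B. compact B \<and> open_bisection m iv B \<and> \<gamma> \<in> B"
  proof
    fix \<gamma>
    have b1: "\<forall>x. open x \<longrightarrow> (\<exists>B'. B' \<subseteq> {U. compact U \<and> open_bisection m iv U} \<and> \<Union>B' = x)"
      using basis unfolding topological_basis_def by (rule conjunct2)
    have "\<exists>B'. B' \<subseteq> {U. compact U \<and> open_bisection m iv U} \<and> \<Union>B' = UNIV"
      by (rule b1[rule_format, OF open_UNIV])
    then show "\<exists>B. compact B \<and> open_bisection m iv B \<and> \<gamma> \<in> B"
    proof (elim exE conjE)
      fix B' assume h1: "B' \<subseteq> {U. compact U \<and> open_bisection m iv U}" and h2: "\<Union>B' = UNIV"
      have "\<gamma> \<in> \<Union>B'" using h2 by simp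
      then obtain b where hb: "b \<in> B'" "\<gamma> \<in> b" by (rule UnionE)
      have "b \<in> {U. compact U \<and> open_bisection m iv U}" by (rule subsetD[OF h1 hb(1)])
      then show ?thesis using hb(2) by (intro exI[of _ b]) simp
    qed
  qed
  then have "\<exists>B. \<forall>\<gamma>. compact (B \<gamma>) \<and> open_bisection m iv (B \<gamma>) \<and> \<gamma> \<in> B \<gamma>"
    by (rule choice)
  then obtain B where B0: "\<forall>\<gamma>. compact (B \<gamma>) \<and> open_bisection m iv (B \<gamma>) \<and> \<gamma> \<in> B \<gamma>"
    by (rule exE)
  have B: "compact (B \<gamma>) \<and> open_bisection m iv (B \<gamma>) \<and> \<gamma> \<in> B \<gamma>" for \<gamma>
    using B0 by (rule spec)
  have Bopen: "open (B \<gamma>)" for \<gamma> using B[of \<gamma>] unfolding open_bisection_def by simp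
  have Bclosed: "closed (B \<gamma>)" for \<gamma> using B[of \<gamma>] by (intro compact_imp_closed) simp
  have Bd: "inj_on d (B \<gamma>)" for \<gamma> using B[of \<gamma>] unfolding open_bisection_def d_def by (intro homeo_inj[of m iv]) simp
  have Br: "inj_on r (B \<gamma>)" for \<gamma> using B[of \<gamma>] unfolding open_bisection_def r_def by (intro homeo_inj[of m iv]) simp
  define S where "S = {\<gamma>. x \<gamma> \<noteq> 0}"
  have finS: "finite S" using assms(5) unfolding S_def groupoid_ring_hom_def by blast
  have xS: "x \<gamma> \<noteq> 0 \<Longrightarrow> d \<gamma> = u \<and> r \<gamma> = v" for \<gamma>
    using assms(5) unfolding groupoid_ring_hom_def d_def r_def by blast
  define f :: "'g \<Rightarrow> 'r" where "f = (\<lambda>a. \<Sum>\<gamma>\<in>S. if a \<in> B \<gamma> then x \<gamma> else 0)"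
  have fr: "f a = x a" if "r a = v" for a
  proof -
    have "f a = (\<Sum>\<gamma>\<in>S. if a = \<gamma> then x \<gamma> else 0)"
      unfolding f_def
    proof (rule sum.cong)
      fix \<gamma> assume "\<gamma> \<in> S"
      then have "r \<gamma> = v" using xS S_def by blast
      then have "a \<in> B \<gamma> \<longleftrightarrow> a = \<gamma>" using Br[of \<gamma>] B[of \<gamma>] that \<open>r \<gamma> = v\<close> unfolding inj_on_def by auto
      then show "(if a \<in> B \<gamma> then x \<gamma> else 0) = (if a = \<gamma> then x \<gamma> else 0)" by simp
    qed simp
    also have "\<dots> = x a" using finS by (simp add: S_def)
    finally show ?thesis .
  qed
  have fd: "f a = x a" if "d a = u" for a
  proof -
    have "f a = (\<Sum>\<gamma>\<in>S. if a = \<gamma> then x \<gamma> else 0)"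
      unfolding f_def
    proof (rule sum.cong)
      fix \<gamma> assume "\<gamma> \<in> S"
      then have "d \<gamma> = u" using xS S_def by blast
      then have "a \<in> B \<gamma> \<longleftrightarrow> a = \<gamma>" using Bd[of \<gamma>] B[of \<gamma>] that \<open>d \<gamma> = u\<close> unfolding inj_on_def by auto
      then show "(if a \<in> B \<gamma> then x \<gamma> else 0) = (if a = \<gamma> then x \<gamma> else 0)" by simp
    qed simp
    also have "\<dots> = x a" using finS by (simp add: S_def)
    finally show ?thesis .
  qed
  have fst: "f \<in> steinberg"
  proof -
    define K0 where "K0 = (\<Union>\<gamma>\<in>S. B \<gamma>)"
    have cK: "compact K0" unfolding K0_def using finS B by blast
    have "{a. f a \<noteq> 0} \<subseteq> K0"
    proof
      fix a assume "a \<in> {a. f a \<noteq> 0}"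
      then have "(\<Sum>\<gamma>\<in>S. if a \<in> B \<gamma> then x \<gamma> else 0) \<noteq> 0" by (simp add: f_def)
      then obtain \<gamma> where g1: "\<gamma> \<in> S" and g2: "(if a \<in> B \<gamma> then x \<gamma> else 0) \<noteq> 0"
        by (rule sum.not_neutral_contains_not_neutral)
      have "a \<in> B \<gamma>" using g2 by (cases "a \<in> B \<gamma>") simp_all
      then show "a \<in> K0" unfolding K0_def using g1 by (rule UN_I[rotated])
    qed
    then have sub: "closure {a. f a \<noteq> 0} \<subseteq> K0"
      using closure_minimal compact_imp_closed[OF cK] by blast
    have c1: "compact (closure {a. f a \<noteq> 0})"
    proof -
      have "compact (K0 \<inter> closure {a. f a \<noteq> 0})"
        by (rule compact_Int_closed[OF cK closed_closure])
      moreover have "K0 \<inter> closure {a. f a \<noteq> 0} = closure {a. f a \<noteq> 0}" using sub by blast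
      ultimately show ?thesis by simp
    qed
    have lc: "locconst (\<lambda>b. if b \<in> B \<gamma> then x \<gamma> else 0)" for \<gamma>
      unfolding locconst_def
    proof
      fix a
      show "\<exists>U. open U \<and> a \<in> U \<and> (\<forall>b\<in>U. (if b \<in> B \<gamma> then x \<gamma> else 0) = (if a \<in> B \<gamma> then x \<gamma> else 0))"
      proof (cases "a \<in> B \<gamma>")
        case True
        then show ?thesis using Bopen[of \<gamma>] by (intro exI[of _ "B \<gamma>"]) simp
      next
        case False
        have "open (- B \<gamma>)" using Bclosed[of \<gamma>] by (simp add: open_Compl)
        then show ?thesis using False by (intro exI[of _ "- B \<gamma>"]) simp
      qed
    qed
    have "locconst f" unfolding f_def
      by (rule locconst_sum[OF finS]) (simp add: lc)
    then have c2: "\<forall>a. \<exists>U. open U \<and> a \<in> U \<and> (\<forall>b\<in>U. f b = f a)"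
      unfolding locconst_def .
    show ?thesis unfolding steinberg_def using c1 c2 by blast
  qed
  obtain g :: "'g \<Rightarrow> 'r" where gst: "g \<in> steinberg" and fgf: "conv m iv (conv m iv f g) f = f"
    using assms(2) fst unfolding von_neumann_regular_steinberg_def by blast
  define y where "y = (\<lambda>\<beta>. if d \<beta> = v \<and> r \<beta> = u then g \<beta> else 0)"
  have yfin: "finite {\<beta>. y \<beta> \<noteq> 0}"
  proof -
    define K where "K = closure {a. g a \<noteq> 0}"
    have cK: "compact K" using gst unfolding steinberg_def K_def by blast
    have "K \<subseteq> \<Union>{U. open U \<and> inj_on d U}"
    proof
      fix a assume "a \<in> K"
      obtain U where "open U" "a \<in> U" "homeo_onto_open_units m iv (gdom m iv) U"
        using et unfolding etale_def by blast
      then have "inj_on d U" unfolding d_def by (intro homeo_inj[of m iv]) simp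
      then show "a \<in> \<Union>{U. open U \<and> inj_on d U}" using \<open>open U\<close> \<open>a \<in> U\<close> by blast
    qed
    then obtain D where D: "D \<subseteq> {U. open U \<and> inj_on d U}" "finite D" "K \<subseteq> \<Union>D"
    proof -
      have oc: "\<forall>c\<in>{U. open U \<and> inj_on d U}. open c" by simp
      have HB: "\<forall>C. (\<forall>c\<in>C. open c) \<and> K \<subseteq> \<Union>C \<longrightarrow> (\<exists>D\<subseteq>C. finite D \<and> K \<subseteq> \<Union>D)"
        using cK unfolding compact_eq_Heine_Borel .
      have "\<exists>D\<subseteq>{U. open U \<and> inj_on d U}. finite D \<and> K \<subseteq> \<Union>D"
        using HB[rule_format, OF conjI[OF oc \<open>K \<subseteq> \<Union>{U. open U \<and> inj_on d U}\<close>]] .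
      then show ?thesis
        apply (elim exE conjE)
        apply (rule that)
          apply assumption+
        done
    qed
    have sub2: "{\<beta>. y \<beta> \<noteq> 0} \<subseteq> (\<Union>U\<in>D. {\<beta>\<in>U. d \<beta> = v})"
    proof
      fix \<beta> assume "\<beta> \<in> {\<beta>. y \<beta> \<noteq> 0}"
      then have "g \<beta> \<noteq> 0" "d \<beta> = v" by (auto simp: y_def split: if_splits)
      then have "\<beta> \<in> K" unfolding K_def by (intro subsetD[OF closure_subset]) simp
      then have "\<beta> \<in> \<Union>D" using D(3) by (rule subsetD[rotated])
      then obtain U where "U \<in> D" "\<beta> \<in> U" by (rule UnionE)
      then show "\<beta> \<in> (\<Union>U\<in>D. {\<beta>\<in>U. d \<beta> = v})" using \<open>d \<beta> = v\<close> by blast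
    qed
    moreover have "finite {\<beta>\<in>U. d \<beta> = v}" if "U \<in> D" for U
    proof -
      have inj: "inj_on d U" using D that by blast
      have "{\<beta>\<in>U. d \<beta> = v} \<subseteq> {SOME \<beta>. \<beta> \<in> U \<and> d \<beta> = v}"
      proof
        fix \<beta> assume h: "\<beta> \<in> {\<beta>\<in>U. d \<beta> = v}"
        then have "(SOME \<beta>. \<beta> \<in> U \<and> d \<beta> = v) \<in> U \<and> d (SOME \<beta>. \<beta> \<in> U \<and> d \<beta> = v) = v"
          by (intro someI[of "\<lambda>\<beta>. \<beta> \<in> U \<and> d \<beta> = v"]) simp
        then show "\<beta> \<in> {SOME \<beta>. \<beta> \<in> U \<and> d \<beta> = v}" using h inj unfolding inj_on_def by auto
      qed
      then show ?thesis using finite_subset by blast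
    qed
    moreover have fin2: "finite (\<Union>U\<in>D. {\<beta>\<in>U. d \<beta> = v})"
      using D(2) by (rule finite_UN_I) (rule \<open>\<And>U. U \<in> D \<Longrightarrow> finite {\<beta>\<in>U. d \<beta> = v}\<close>)
    show ?thesis by (rule finite_subset[OF sub2 fin2])
  qed
  have yhom: "y \<in> groupoid_ring_hom m iv v u"
    unfolding groupoid_ring_hom_def using yfin by (auto simp: y_def d_def r_def)
  have inner: "conv m iv f g a = conv m iv x y a" if "r a = v" "d a = v" for a
  proof -
    have sets: "{(\<alpha>, \<beta>). d \<alpha> = r \<beta> \<and> m \<alpha> \<beta> = a \<and> f \<alpha> \<noteq> 0 \<and> g \<beta> \<noteq> 0}
      = {(\<alpha>, \<beta>). d \<alpha> = r \<beta> \<and> m \<alpha> \<beta> = a \<and> x \<alpha> \<noteq> 0 \<and> y \<beta> \<noteq> 0}"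
      (is "?A = ?B")
    proof (intro set_eqI iffI; clarsimp)
      fix \<alpha> \<beta> assume h: "d \<alpha> = r \<beta>" "a = m \<alpha> \<beta>"
      then have c: "d (m \<alpha> \<beta>) = d \<beta> \<and> r (m \<alpha> \<beta>) = r \<alpha>" using comp[OF h(1)] by simp
      then have ra: "r \<alpha> = v" using that h by simp
      then have fx: "f \<alpha> = x \<alpha>" using fr by blast
      {
        assume "f \<alpha> \<noteq> 0" "g \<beta> \<noteq> 0"
        then have "x \<alpha> \<noteq> 0" using fx by simp
        then have "d \<alpha> = u" using xS by blast
        then show "x \<alpha> \<noteq> 0 \<and> y \<beta> \<noteq> 0" using \<open>x \<alpha> \<noteq> 0\<close> \<open>g \<beta> \<noteq> 0\<close> h c that
          by (simp add: y_def d_def r_def)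
      }
      {
        assume "x \<alpha> \<noteq> 0" "y \<beta> \<noteq> 0"
        then show "f \<alpha> \<noteq> 0 \<and> g \<beta> \<noteq> 0" using fx by (auto simp: y_def split: if_splits)
      }
    qed
    show ?thesis unfolding convdr sets
    proof (rule sum.cong; clarsimp)
      fix \<alpha> \<beta> assume h: "d \<alpha> = r \<beta>" "a = m \<alpha> \<beta>" "x \<alpha> \<noteq> 0" "y \<beta> \<noteq> 0"
      then have "r \<alpha> = v" using comp[OF h(1)] h(2) that by simp
      then have "f \<alpha> = x \<alpha>" using fr by blast
      moreover have "g \<beta> = y \<beta>" using h(4) by (auto simp: y_def split: if_splits)
      ultimately show "f \<alpha> * g \<beta> = x \<alpha> * y \<beta>" by simp
    qed
  qed
  have "conv m iv (conv m iv x y) x \<gamma> = x \<gamma>" for \<gamma>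
  proof (cases "d \<gamma> = u \<and> r \<gamma> = v")
    case True
    have sets: "{(\<alpha>, \<delta>). d \<alpha> = r \<delta> \<and> m \<alpha> \<delta> = \<gamma> \<and> conv m iv f g \<alpha> \<noteq> 0 \<and> f \<delta> \<noteq> 0}
      = {(\<alpha>, \<delta>). d \<alpha> = r \<delta> \<and> m \<alpha> \<delta> = \<gamma> \<and> conv m iv x y \<alpha> \<noteq> 0 \<and> x \<delta> \<noteq> 0}"
    proof (intro set_eqI iffI; clarsimp)
      fix \<alpha> \<delta> assume h: "d \<alpha> = r \<delta>" "\<gamma> = m \<alpha> \<delta>"
      then have c: "d (m \<alpha> \<delta>) = d \<delta> \<and> r (m \<alpha> \<delta>) = r \<alpha>" using comp[OF h(1)] by simp
      then have fx: "f \<delta> = x \<delta>" using fd True h by simp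
      have ra: "r \<alpha> = v" using c True h by simp
      {
        assume "conv m iv f g \<alpha> \<noteq> 0" "f \<delta> \<noteq> 0"
        then have "x \<delta> \<noteq> 0" using fx by simp
        then have "d \<alpha> = v" using xS[OF \<open>x \<delta> \<noteq> 0\<close>] h(1) by simp
        then show "conv m iv x y \<alpha> \<noteq> 0 \<and> x \<delta> \<noteq> 0"
          using inner[OF ra] \<open>conv m iv f g \<alpha> \<noteq> 0\<close> \<open>x \<delta> \<noteq> 0\<close> by simp
      }
      {
        assume "conv m iv x y \<alpha> \<noteq> 0" "x \<delta> \<noteq> 0"
        then have "d \<alpha> = v" using xS[OF \<open>x \<delta> \<noteq> 0\<close>] h(1) by simp
        then show "conv m iv f g \<alpha> \<noteq> 0 \<and> f \<delta> \<noteq> 0"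
          using inner[OF ra] \<open>conv m iv x y \<alpha> \<noteq> 0\<close> \<open>x \<delta> \<noteq> 0\<close> fx by simp
      }
    qed
    have "conv m iv (conv m iv x y) x \<gamma> = conv m iv (conv m iv f g) f \<gamma>"
      unfolding convdr[of "conv m iv x y"] convdr[of "conv m iv f g"] sets
    proof (rule sum.cong; clarsimp)
      fix \<alpha> \<delta> assume h: "d \<alpha> = r \<delta>" "\<gamma> = m \<alpha> \<delta>" "conv m iv x y \<alpha> \<noteq> 0" "x \<delta> \<noteq> 0"
      then have c: "d (m \<alpha> \<delta>) = d \<delta> \<and> r (m \<alpha> \<delta>) = r \<alpha>" using comp[OF h(1)] by simp
      then have fx: "f \<delta> = x \<delta>" using fd True h by simp
      have ra: "r \<alpha> = v" using c True h by simp
      have "d \<alpha> = v" using xS[OF h(4)] h(1) by simp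
      then show "conv m iv x y \<alpha> * x \<delta> = conv m iv f g \<alpha> * f \<delta>"
        using inner[OF ra] fx by simp
    qed
    also have "\<dots> = f \<gamma>" using fgf by simp
    also have "\<dots> = x \<gamma>" using fd True by blast
    finally show ?thesis .
  next
    case False
    have "x \<gamma> = 0" using xS False by blast
    have empty: "{(\<alpha>, \<delta>). d \<alpha> = r \<delta> \<and> m \<alpha> \<delta> = \<gamma> \<and> conv m iv x y \<alpha> \<noteq> 0 \<and> x \<delta> \<noteq> 0} = {}"
    proof (rule ccontr)
      assume "\<not> ?thesis"
      then obtain \<alpha> \<delta> where h: "d \<alpha> = r \<delta>" "m \<alpha> \<delta> = \<gamma>" "conv m iv x y \<alpha> \<noteq> 0" "x \<delta> \<noteq> 0"
        by blast
      then have c: "d (m \<alpha> \<delta>) = d \<delta> \<and> r (m \<alpha> \<delta>) = r \<alpha>" using comp[OF h(1)] by simp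
      have "d \<gamma> = u" using c h(2) xS[OF h(4)] by simp
      have ne: "{(a, b). d a = r b \<and> m a b = \<alpha> \<and> x a \<noteq> 0 \<and> y b \<noteq> 0} \<noteq> {}"
        using h(3) unfolding convdr by (metis (no_types, lifting) sum.empty)
      then obtain a b where h2: "d a = r b" "m a b = \<alpha>" "x a \<noteq> 0" by blast
      then have "r \<alpha> = r a" using comp[OF h2(1)] by simp
      then have "r \<gamma> = v" using xS[OF h2(3)] c h(2) by simp
      then show False using False \<open>d \<gamma> = u\<close> by blast
    qed
    show ?thesis unfolding convdr[of "conv m iv x y"] empty using \<open>x \<gamma> = 0\<close> by simp
  qed
  then show ?thesis using yhom by blast
qed

end
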